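(* Let $N=p^nN_1$ with $n\ge2$, $p\ge3$ prime, and $N_1=q_1q_2\cdots q_r$ where $q_1,\dots,q_r$ are distinct primes, different from $p$, with $p-1\equiv0\pmod{q_i-1}$ for all $i$. Let $u$ be an integer with $\gcd(u,N)=1$, and let $d,m\in\mathbb{Z}_N$. Define $h_d(k)=\big((k+d)^p-k^p-d^p\big)m+udk$. Then $h_d(k)/\gcd(d,N)$ is a permutation polynomial over $\mathbb{Z}_{N/\gcd(d,N)}$.
   Context: A polynomial $g$ (integer-valued) is a permutation polynomial over $\mathbb{Z}_M$ if $k\mapsto g(k)\bmod M$ is a bijection of $\mathbb{Z}_M=\{0,\dots,M-1\}$; $\gcd(0,N)=N$. *)

theory Defs
  imports "HOL-Computational_Algebra.Primes"
begin

definition perm_poly_mod :: "int \<Rightarrow> (int \<Rightarrow> int) \<Rightarrow> bool" where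
  "perm_poly_mod M g \<longleftrightarrow> bij_betw (\<lambda>k. g k mod M) {0..<M} {0..<M}"

definition h_poly :: "int \<Rightarrow> int \<Rightarrow> nat \<Rightarrow> int \<Rightarrow> int \<Rightarrow> int" where
  "h_poly m u p d k = ((k + d) ^ p - k ^ p - d ^ p) * m + u * d * k"

end

theory Submission imports Defs "HOL-Number_Theory.Number_Theory" begin

lemma diff_pow_dvd: "((a::int) - b) dvd (a ^ k - b ^ k)"
proof (induction k)
  case 0 then show ?case by simp
next
  case (Suc k)
  have "a ^ Suc k - b ^ Suc k = a * (a^k - b^k) + (a - b) * b^k" by (simp add: algebra_simps)
  then show ?case using Suc by (simp add: dvd_add)
qed

lemma H_diff:
  fixes a b d :: int and p :: nat
  assumes "prime p"
  shows "(d * int p * (a - b)) dvd (((a+d)^p - a^p - d^p) - ((b+d)^p - b^p - d^p))"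
proof -
  have e1: "(a+d)^p - (b+d)^p = (\<Sum>k\<le>p. of_nat (p choose k) * (a^k - b^k) * d^(p-k))"
    by (simp add: binomial_ring sum_subtractf[symmetric] algebra_simps)
  have e2: "(\<Sum>k\<le>p. of_nat (p choose k) * (a^k - b^k) * d^(p-k)) =
     (\<Sum>k<p. of_nat (p choose k) * (a^k - b^k) * d^(p-k)) + (a^p - b^p)"
    by (simp add: lessThan_Suc_atMost[symmetric])
  have "((a+d)^p - a^p - d^p) - ((b+d)^p - b^p - d^p) = (\<Sum>k<p. of_nat (p choose k) * (a^k - b^k) * d^(p-k))"
    using e1 e2 by simp
  moreover have "(d * int p * (a - b)) dvd (\<Sum>k<p. of_nat (p choose k) * (a^k - b^k) * d^(p-k))"
  proof (rule dvd_sum)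
    fix k assume k: "k \<in> {..<p}"
    show "(d * int p * (a - b)) dvd (of_nat (p choose k) * (a^k - b^k) * d^(p-k))"
    proof (cases "k = 0")
      case True then show ?thesis by simp
    next
      case False
      have "p dvd (p choose k)" using dvd_choose_prime[of k p] False k assms by auto
      then have h1: "int p dvd of_nat (p choose k)" by (simp add: int_dvd_int_iff)
      have h2: "d dvd d^(p-k)" using k by (simp add: dvd_power)
      have "(int p * (a - b)) * d dvd (of_nat (p choose k) * (a^k - b^k)) * d^(p-k)"
        by (intro mult_dvd_mono h1 h2 diff_pow_dvd)
      then show ?thesis by (simp add: ac_simps)
    qed
  qed
  ultimately show ?thesis by simp
qed

lemma fermat_nat:
  fixes q p x :: nat
  assumes "prime q" "(q - 1) dvd (p - 1)" "p \<ge> 1"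
  shows "[x ^ p = x] (mod q)"
proof (cases "q dvd x")
  case True
  then have "q dvd x ^ p" using assms(3) dvd_trans[OF True dvd_power[of p x]] by simp
  then show ?thesis using True by (simp add: cong_def dvd_eq_mod_eq_0)
next
  case False
  obtain j where j: "p - 1 = (q - 1) * j" using assms(2) by blast
  have "[x ^ (q - 1) = 1] (mod q)" using fermat_theorem[OF assms(1) False] .
  then have "[(x ^ (q - 1)) ^ j = 1 ^ j] (mod q)" by (rule cong_pow)
  then have "[x * (x ^ (q - 1)) ^ j = x * 1 ^ j] (mod q)" by (rule cong_mult[OF cong_refl])
  moreover have "x * (x ^ (q - 1)) ^ j = x ^ p"
    using j assms(3) by (metis power_Suc power_mult Suc_diff_1 less_le_trans zero_less_one)
  ultimately show ?thesis by simp
qed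

lemma fermat_int:
  fixes q p :: nat and k :: int
  assumes "prime q" "(q - 1) dvd (p - 1)" "p \<ge> 1"
  shows "int q dvd (k ^ p - k)"
proof -
  define x where "x = nat (k mod int q)"
  have q0: "q > 0" using assms(1) prime_gt_0_nat by blast
  have kx: "int x = k mod int q" unfolding x_def using q0 by simp
  have "[x ^ p = x] (mod q)" by (rule fermat_nat[OF assms])
  then have "[int x ^ p = int x] (mod int q)" by (metis cong_int_iff of_nat_power)
  moreover have "[k = int x] (mod int q)" using kx by (simp add: cong_def)
  ultimately have "[k ^ p = k] (mod int q)"
    by (meson cong_pow cong_sym cong_trans)
  then show ?thesis by (simp add: cong_iff_dvd_diff dvd_diff_commute)
qed

lemma sqfree_N:
  fixes p n q :: nat and Q :: "nat set"
  assumes "prime p" "finite Q" "\<forall>q\<in>Q. prime q" "p \<notin> Q" "q \<in> Q"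
  shows "\<not> (q * q) dvd (p ^ n * \<Prod>Q)"
proof
  assume h: "(q * q) dvd (p ^ n * \<Prod>Q)"
  have pq: "prime q" using assms by auto
  have "\<Prod>Q = q * \<Prod>(Q - {q})" using assms(2,5) by (simp add: prod.remove)
  then have "q * q dvd q * (p ^ n * \<Prod>(Q - {q}))" using h by (simp add: ac_simps)
  then have "q dvd p ^ n * \<Prod>(Q - {q})" using pq by (simp add: prime_gt_0_nat)
  then have "q dvd p ^ n \<or> q dvd \<Prod>(Q - {q})" using pq prime_dvd_mult_iff by auto
  then show False
  proof
    assume "q dvd p ^ n"
    then have "q dvd p" using pq prime_dvd_power by auto
    then have "q = p" using pq assms(1) primes_dvd_imp_eq by auto
    then show False using assms by auto
  next
    assume "q dvd \<Prod>(Q - {q})"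
    then obtain x where "x \<in> Q - {q}" "q dvd x" using prime_dvd_prod_iff[of "Q - {q}" q id] pq assms(2) by auto
    then show False using pq assms(3) primes_dvd_imp_eq[of q x] by auto
  qed
qed

lemma prime_div_N:
  fixes p n :: nat and Q :: "nat set" and r :: int
  assumes "prime p" "finite Q" "\<forall>q\<in>Q. prime q" "prime r" "r dvd int p ^ n * int (\<Prod>Q)" "r \<noteq> int p"
  shows "nat r \<in> Q \<and> r = int (nat r)"
proof -
  have r0: "r > 0" using assms(4) prime_gt_0_int by blast
  define q where "q = nat r"
  have rq: "r = int q" using r0 q_def by simp
  have pq: "prime q" using assms(4) rq by simp
  have "int q dvd int (p ^ n * \<Prod>Q)" using assms(5) rq by simp
  then have "q dvd p ^ n * \<Prod>Q" by (simp only: int_dvd_int_iff)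
  then have "q dvd p ^ n \<or> q dvd \<Prod>Q" using pq prime_dvd_mult_iff by auto
  then have "q \<in> Q"
  proof
    assume "q dvd p ^ n"
    then have "q dvd p" using pq prime_dvd_power by auto
    then have "q = p" using pq assms(1) primes_dvd_imp_eq by auto
    then show ?thesis using assms(6) rq by auto
  next
    assume "q dvd \<Prod>Q"
    then obtain x where "x \<in> Q" "q dvd x" using prime_dvd_prod_iff[of Q q id] pq assms(2) by auto
    then show ?thesis using pq assms(3) primes_dvd_imp_eq[of q x] by auto
  qed
  then show ?thesis using r0 unfolding q_def by simp
qed

lemma inj_bij_mod:
  fixes M :: int and f :: "int \<Rightarrow> int"
  assumes "M > 0" "inj_on (\<lambda>k. f k mod M) {0..<M}"
  shows "bij_betw (\<lambda>k. f k mod M) {0..<M} {0..<M}"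
proof -
  have sub: "(\<lambda>k. f k mod M) ` {0..<M} \<subseteq> {0..<M}" using assms(1) by auto
  have "card ((\<lambda>k. f k mod M) ` {0..<M}) = card {0..<M}" using assms(2) by (simp add: card_image)
  then have "(\<lambda>k. f k mod M) ` {0..<M} = {0..<M}" using sub by (simp add: card_subset_eq)
  then show ?thesis using assms(2) by (simp add: bij_betw_def)
qed

theorem lemma11:
  fixes p n :: nat and Q :: "nat set" and N u d m :: int
  assumes "prime p" and "p \<ge> 3" and "n \<ge> 2"
    and "finite Q" and "\<forall>q\<in>Q. prime q" and "p \<notin> Q"
    and "\<forall>q\<in>Q. (q - 1) dvd (p - 1)"
    and "N = int p ^ n * int (\<Prod>Q)"
    and "gcd u N = 1"
    and "d \<in> {0..<N}" and "m \<in> {0..<N}"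
  shows "perm_poly_mod (N div gcd d N) (\<lambda>k. h_poly m u p d k div gcd d N)"
proof -
  note pp = assms(1)
  have p0: "p > 0" using assms(2) by simp
  have Q0: "\<Prod>Q > 0" using assms(4,5) by (metis prime_gt_0_nat prod_pos)
  have N0: "N > 0" using assms(8) p0 Q0 by (simp del: of_nat_prod)
  define g where "g = gcd d N"
  define M where "M = N div g"
  define f where "f = (\<lambda>k. h_poly m u p d k div g)"
  have g0: "g > 0" unfolding g_def using N0 by simp
  have gN: "N = g * M" unfolding M_def g_def by simp
  have M0: "M > 0" using gN N0 g0 by (simp add: zero_less_mult_iff)
  show ?thesis
  proof (cases "d = 0")
    case True
    then have "M = 1" unfolding M_def g_def using N0 by simp
    moreover have "{0..<(1::int)} = {0}" by auto
    ultimately show ?thesis unfolding perm_poly_mod_def M_def[symmetric] g_def[symmetric]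
      by (simp add: bij_betw_def inj_on_def)
  next
    case False
    define d' where "d' = d div g"
    have dd': "d = g * d'" unfolding d'_def g_def by simp
    have cop: "coprime d' M" unfolding d'_def M_def g_def using False div_gcd_coprime by blast
    define H where "H = (\<lambda>k::int. (k+d)^p - k^p - d^p)"
    have Hd: "(d * int p * (a - b)) dvd (H a - H b)" for a b
      unfolding H_def using H_diff[OF pp] by blast
    have H00: "H 0 = 0" unfolding H_def using p0 by simp
    have "\<forall>k. \<exists>s. H k = d * s"
    proof
      fix k
      have "(d * int p * (k - 0)) dvd (H k - H 0)" by (rule Hd)
      then have "d dvd H k" using H00 by (metis diff_zero dvd_mult_left)
      then show "\<exists>s. H k = d * s" by blast
    qed
    then obtain S where S: "\<And>k. H k = d * S k" by metis
    have fk: "f k = d' * (S k * m + u * k)" for k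
    proof -
      have "h_poly m u p d k = g * (d' * (S k * m + u * k))"
        unfolding h_poly_def using S[of k] dd' unfolding H_def by (simp add: algebra_simps)
      then show ?thesis unfolding f_def using g0 by simp
    qed
    have inj: "inj_on (\<lambda>k. f k mod M) {0..<M}"
    proof (rule inj_onI)
      fix a b assume a: "a \<in> {0..<M}" and b: "b \<in> {0..<M}" and ab: "f a mod M = f b mod M"
      obtain T where T: "H a - H b = d * int p * (a - b) * T" using Hd[of a b] by blast
      have "d * (S a - S b) = d * (int p * (a - b) * T)"
        using T S[of a] S[of b] by (simp add: algebra_simps)
      then have ST: "S a - S b = int p * (a - b) * T"
        using False by simp
      define W where "W = u + int p * T * m"
      have "f a - f b = d' * ((S a - S b) * m + u * (a - b))"
        unfolding fk by (simp add: algebra_simps)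
      also have "... = d' * ((a - b) * W)" unfolding ST W_def by (simp add: algebra_simps)
      finally have "f a - f b = d' * ((a - b) * W)" .
      moreover have "M dvd f a - f b" using ab by (simp add: mod_eq_dvd_iff)
      ultimately have "M dvd d' * ((a - b) * W)" by simp
      moreover have "coprime M d'" using cop by (simp add: coprime_commute)
      ultimately have MW: "M dvd (a - b) * W" by (simp add: coprime_dvd_mult_right_iff)
      have key: "r ^ k dvd (a - b)" if r: "prime r" and rk: "r ^ k dvd M" for r k
      proof (cases "r = int p")
        case True
        have "\<not> int p dvd u"
        proof
          assume "int p dvd u"
          moreover have "int p dvd N" using assms(8,3) by simp
          ultimately have "int p dvd gcd u N" by simp
          then show False using assms(9) pp by simp
        qed
        then have "\<not> int p dvd W" unfolding W_def by (simp add: dvd_add_left_iff mult.assoc)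
        then have "coprime (int p) W" using pp by (simp add: prime_imp_coprime)
        then have "coprime (r ^ k) W" using True by simp
        moreover have "r ^ k dvd (a - b) * W" using rk MW dvd_trans by blast
        ultimately show ?thesis by (simp add: coprime_dvd_mult_left_iff)
      next
        case False
        show ?thesis
        proof (cases "k = 0")
          case True then show ?thesis by simp
        next
          case k0: False
          have "r dvd r ^ k" using k0 by (simp add: dvd_power)
          then have rM: "r dvd M" using rk by (rule dvd_trans)
          then have rN: "r dvd N" using gN by simp
          obtain q where qQ: "q \<in> Q" and rq: "r = int q"
            using prime_div_N[OF pp assms(4,5) r _ False] rN assms(8) by blast
          have pq: "prime q" using qQ assms(5) by auto
          have sq: "\<not> (r * r) dvd N"
          proof
            assume "(r * r) dvd N"
            then have "int (q * q) dvd int (p ^ n * \<Prod>Q)" using rq assms(8) by simp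
            then have "(q * q) dvd (p ^ n * \<Prod>Q)" by (simp only: int_dvd_int_iff)
            then show False using sqfree_N[OF pp assms(4,5,6) qQ] by blast
          qed
          have k1: "k = 1"
          proof (rule ccontr)
            assume "k \<noteq> 1"
            then have "2 \<le> k" using k0 by simp
            then have "r ^ 2 dvd r ^ k" by (rule le_imp_power_dvd)
            then have "r * r dvd r ^ k" by (simp add: power2_eq_square)
            then have "r * r dvd M" using rk by (rule dvd_trans)
            then have "r * r dvd N" using gN by simp
            then show False using sq by simp
          qed
          have rd: "\<not> r dvd d"
          proof
            assume "r dvd d"
            then have "r dvd g" unfolding g_def using rN by simp
            then have "r * r dvd g * M" using rM by (simp add: mult_dvd_mono)
            then show False using sq gN by simp
          qed
          have rp: "\<not> r dvd int p"
          proof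
            assume "r dvd int p"
            then have "q dvd p" using rq by (simp only: int_dvd_int_iff)
            then have "q = p" using pq pp primes_dvd_imp_eq by auto
            then show False using qQ assms(6) by simp
          qed
          have qdvdH: "r dvd H k" for k
          proof -
            have f1: "r dvd (k + d) ^ p - (k + d)" using fermat_int[OF pq] qQ assms(7) p0 rq by simp
            have f2: "r dvd k ^ p - k" using fermat_int[OF pq] qQ assms(7) p0 rq by simp
            have f3: "r dvd d ^ p - d" using fermat_int[OF pq] qQ assms(7) p0 rq by simp
            have e: "H k = ((k + d) ^ p - (k + d)) - (k ^ p - k) - (d ^ p - d)" unfolding H_def by simp
            show ?thesis by (subst e) (intro dvd_diff f1 f2 f3)
          qed
          have "r dvd d * int p * (a - b) * T" using T qdvdH[of a] qdvdH[of b]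
            by (metis dvd_diff)
          then have "r dvd (a - b) * T" using rd rp r by (simp add: prime_dvd_mult_iff mult.assoc)
          then have "r dvd (a - b) \<or> r dvd T" using r by (simp add: prime_dvd_mult_iff)
          then have "r dvd (a - b)"
          proof
            assume "r dvd a - b" then show ?thesis .
          next
            assume rT: "r dvd T"
            show ?thesis
            proof (rule ccontr)
              assume nab: "\<not> r dvd a - b"
              have "r dvd (a - b) * W" using rM MW dvd_trans by blast
              then have "r dvd W" using nab r by (simp add: prime_dvd_mult_iff)
              moreover have "r dvd int p * T * m" using rT by simp
              ultimately have "r dvd u" unfolding W_def by (simp add: dvd_add_left_iff)
              then have "r dvd gcd u N" using rN by simp
              then show False using assms(9) prime_gt_1_int[OF r] by simp
            qed
          qed
          then show ?thesis using k1 by simp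
        qed
      qed
      show "a = b"
      proof (rule ccontr)
      assume nab: "a \<noteq> b"
      have "M dvd (a - b)"
      proof (rule multiplicity_le_imp_dvd)
        show "M \<noteq> 0" using M0 by simp
      next
        fix r :: int assume r: "prime r"
        have "r ^ multiplicity r M dvd M" by (simp add: multiplicity_dvd)
        then have h: "r ^ multiplicity r M dvd (a - b)" using key r by blast
        have nu: "\<not> is_unit r" using r not_prime_unit by blast
        have nz: "a - b \<noteq> 0" using nab by simp
        show "multiplicity r M \<le> multiplicity r (a - b)"
          by (rule multiplicity_geI[OF nz nu h])
      qed
      then have "M dvd (b - a)" by (simp add: dvd_diff_commute)
      then show False using a b zdvd_imp_le[of M "a-b"] zdvd_imp_le[of M "b-a"] \<open>M dvd (a - b)\<close> nab
        by (cases "a < b"; cases "b < a") auto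
      qed
    qed
    have "bij_betw (\<lambda>k. f k mod M) {0..<M} {0..<M}" by (rule inj_bij_mod[OF M0 inj])
    then show ?thesis unfolding perm_poly_mod_def M_def g_def f_def .
  qed
qed

end
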